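(* Let $\Gamma\subsetneqq\mathbb{R}^n$ be an open convex cone with vertex at the origin such that $\{\lambda:\lambda_i>0\ \forall i\}\subset\Gamma\subset\{\lambda:\sum_i\lambda_i>0\}$, and let $f$ be a smooth symmetric function on $\Gamma$ with $\frac{\partial f}{\partial\lambda_i}>0$ in $\Gamma$ for all $i$ and $\limsup_{\lambda\to\lambda_0}f(\lambda)<1$ for every $\lambda_0\in\partial\Gamma$. Let $A=\mathrm{diag}(a_1,\dots,a_n)\in\mathcal{A}$ with $0<a_1\leq\cdots\leq a_n$. Let $g:[1,\infty)\to\mathbb{R}$ be the unique smooth function with $(g(w),a_2w,\dots,a_nw)\in\Gamma$ and $f(g(w),a_2w,\dots,a_nw)=1$ for $w\geq1$. For $\delta\geq0$ and $c_2>1$ let $w_{c_2,\delta}(s)$ be the solution on $[1,+\infty)$ of $$\frac{dw}{ds}=\frac{g(w)-a_1w}{(2a_n+\delta)s},\qquad w(1)=c_2.$$ Then for every $s\in[1,+\infty)$, $0<\frac{\partial w_{c_2,\delta}}{\partial c_2}(s)\leq1$ and $\lim_{c_2\to+\infty}w_{c_2,\delta}(s)=+\infty$.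
   Context: $S^+(n)$ is the set of real symmetric positive definite $n\times n$ matrices; for $A\in S^+(n)$, $a=\lambda(A)$ denotes its eigenvalues, $\hat a=\max_ia_i$, $\hat f_\lambda(a)=\max_i\frac{\partial f}{\partial\lambda_i}(a)$, and $\mathcal{A}:=\{A\in S^+(n): f(a)=1,\ \frac{\nabla f(a)\cdot a}{2\hat a\hat f_\lambda(a)}>1\}$. *)

theory Defs
  imports "HOL-Analysis.Analysis"
begin

fun Ck_on :: "nat \<Rightarrow> ('a::real_normed_vector \<Rightarrow> 'b::real_normed_vector) \<Rightarrow> 'a set \<Rightarrow> bool" where
  "Ck_on 0 f S = continuous_on S f"
| "Ck_on (Suc k) f S =
     (\<exists>f'. (\<forall>x\<in>S. (f has_derivative f' x) (at x within S)) \<and> (\<forall>v. Ck_on k (\<lambda>x. f' x v) S))"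

definition smooth_on :: "('a::real_normed_vector \<Rightarrow> 'b::real_normed_vector) \<Rightarrow> 'a set \<Rightarrow> bool" where
  "smooth_on f S \<longleftrightarrow> (\<forall>k. Ck_on k f S)"

definition pd :: "'n::finite \<Rightarrow> (real^'n \<Rightarrow> real) \<Rightarrow> real^'n \<Rightarrow> real" where
  "pd i f x = deriv (\<lambda>t. f (x + t *\<^sub>R axis i 1)) 0"

text \<open>Indices 1 and n of an ordered finite index type.\<close>
definition first_idx :: "'n::{finite,linorder}" where "first_idx = (LEAST i. True)"
definition last_idx :: "'n::{finite,linorder}" where "last_idx = (GREATEST i. True)"

text \<open>Condition defining the set \<A>, expressed on the eigenvalue vector a = \<lambda>(A):
  f(a) = 1 and (\<nabla>f(a)\<cdot>a) / (2 \<hat>a \<hat>f_\<lambda>(a)) > 1.\<close>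
definition in_calA :: "(real^'n::finite \<Rightarrow> real) \<Rightarrow> real^'n \<Rightarrow> bool" where
  "in_calA f a \<longleftrightarrow> f a = 1 \<and>
     (\<Sum>i\<in>UNIV. pd i f a * a $ i) / (2 * Max (range (\<lambda>i. a $ i)) * Max (range (\<lambda>i. pd i f a))) > 1"

end

theory Submission
  imports Defs
begin
lemma incr_helper:
  fixes f f' :: "real \<Rightarrow> real"
  assumes ab: "a \<le> b"
    and d: "\<And>x. x \<in> {a..b} \<Longrightarrow> (f has_real_derivative f' x) (at x within {a..b})"
    and nn: "\<And>x. a < x \<Longrightarrow> x < b \<Longrightarrow> f' x \<ge> 0"
  shows "f a \<le> f b"
proof (rule DERIV_nonneg_imp_increasing_open[OF ab])
  fix x assume x: "a < x" "x < b"
  have "(f has_real_derivative f' x) (at x)" using d[of x] x at_within_Icc_at[OF x] by auto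
  thus "\<exists>y. DERIV f x :> y \<and> y \<ge> 0" using nn[OF x] by blast
next
  show "continuous_on {a..b} f" by (rule DERIV_continuous_on[OF d])
qed

lemma decr_helper:
  fixes f f' :: "real \<Rightarrow> real"
  assumes ab: "a \<le> b"
    and d: "\<And>x. x \<in> {a..b} \<Longrightarrow> (f has_real_derivative f' x) (at x within {a..b})"
    and nn: "\<And>x. a < x \<Longrightarrow> x < b \<Longrightarrow> f' x \<le> 0"
  shows "f b \<le> f a"
proof -
  have "(\<lambda>x. - f x) a \<le> (\<lambda>x. - f x) b"
    by (rule incr_helper[OF ab, of _ "\<lambda>x. - f' x"]) (auto intro!: DERIV_minus d nn)
  thus ?thesis by simp
qed

lemma first_idx_le: "first_idx \<le> (i::'n::{finite,linorder})"
proof -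
  have "first_idx = Min (UNIV::'n set)" unfolding first_idx_def
    by (rule Least_equality) auto
  thus ?thesis by (metis Min_le finite UNIV_I)
qed

theorem lemma2p5:
  fixes \<Gamma> :: "((real,'n::{finite,linorder}) vec) set"
    and f :: "(real,'n) vec \<Rightarrow> real"
    and a :: "(real,'n) vec"
    and g :: "real \<Rightarrow> real"
    and \<delta> :: real
    and w :: "real \<Rightarrow> real \<Rightarrow> real"
  assumes \<Gamma>_open: "open \<Gamma>"
    and \<Gamma>_convex: "convex \<Gamma>"
    and \<Gamma>_cone: "\<forall>x\<in>\<Gamma>. \<forall>t>0. t *\<^sub>R x \<in> \<Gamma>"
    and \<Gamma>_proper: "\<Gamma> \<noteq> UNIV"
    and \<Gamma>_pos: "{x. \<forall>i. x $ i > 0} \<subseteq> \<Gamma>"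
    and \<Gamma>_sum: "\<Gamma> \<subseteq> {x. (\<Sum>i\<in>UNIV. x $ i) > 0}"
    and \<Gamma>_sym: "\<forall>\<sigma>. \<sigma> permutes (UNIV::'n::{finite,linorder} set) \<longrightarrow> (\<forall>x\<in>\<Gamma>. (\<chi> i. x $ \<sigma> i) \<in> \<Gamma>)"
    and f_sym: "\<forall>\<sigma>. \<sigma> permutes (UNIV::'n::{finite,linorder} set) \<longrightarrow> (\<forall>x\<in>\<Gamma>. f (\<chi> i. x $ \<sigma> i) = f x)"
    and f_smooth: "smooth_on f \<Gamma>"
    and f_mono: "\<forall>x\<in>\<Gamma>. \<forall>i. pd i f x > 0"
    and f_bdry: "\<forall>x0\<in>frontier \<Gamma>. Limsup (at x0 within \<Gamma>) (\<lambda>x. ereal (f x)) < 1"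
    and a_pos: "0 < a $ first_idx"
    and a_sorted: "\<forall>i j. i \<le> j \<longrightarrow> a $ i \<le> a $ j"
    and a_calA: "in_calA f a"
    and g_smooth: "smooth_on g {1..}"
    and g_in: "\<forall>v\<ge>1. (\<chi> i. if i = first_idx then g v else a $ i * v) \<in> \<Gamma>"
    and g_eq: "\<forall>v\<ge>1. f (\<chi> i. if i = first_idx then g v else a $ i * v) = 1"
    and \<delta>_nonneg: "\<delta> \<ge> 0"
    and w_init: "\<forall>c>1. w c 1 = c"
    and w_ode: "\<forall>c>1. \<forall>s\<ge>1. (w c has_real_derivative
                  (g (w c s) - a $ first_idx * w c s) / ((2 * a $ last_idx + \<delta>) * s)) (at s within {1..})"
    and c2_gt: "c2 > 1"
    and s_ge: "s \<ge> 1"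
  shows "(\<exists>D. ((\<lambda>c. w c s) has_real_derivative D) (at c2) \<and> 0 < D \<and> D \<le> 1)
         \<and> filterlim (\<lambda>c. w c s) at_top at_top"
proof -
  have aall: "\<And>i. a $ i > 0" using a_sorted first_idx_le a_pos by (meson less_le_trans)
  define a1 where "a1 = a $ first_idx"
  define K where "K = 2 * a $ last_idx + \<delta>"
  have a1pos: "a1 > 0" using a_pos a1_def by simp
  have Kpos: "K > 0" using aall[of last_idx] \<delta>_nonneg K_def by simp
  define P where "P = (\<lambda>v. (\<chi> i. if i = first_idx then g v else a $ i * v))"
  have PG: "\<And>v. v \<ge> 1 \<Longrightarrow> P v \<in> \<Gamma>" using g_in P_def by auto
  have Pf: "\<And>v. v \<ge> 1 \<Longrightarrow> f (P v) = 1" using g_eq P_def by auto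
  have Pc: "P v $ i = (if i = first_idx then g v else a $ i * v)" for v i by (simp add: P_def)
  have aG: "a \<in> \<Gamma>" using \<Gamma>_pos aall by auto
  have fa: "f a = 1" using a_calA unfolding in_calA_def by auto
  have "Ck_on (Suc 0) f \<Gamma>" using f_smooth unfolding smooth_on_def by blast
  then obtain f' where f'w: "\<forall>x\<in>\<Gamma>. (f has_derivative f' x) (at x within \<Gamma>)" by auto
  have fd: "\<And>x. x \<in> \<Gamma> \<Longrightarrow> (f has_derivative f' x) (at x)"
    using f'w at_within_open[OF _ \<Gamma>_open] by metis
  have fbl: "\<And>x. x \<in> \<Gamma> \<Longrightarrow> bounded_linear (f' x)"
    using fd has_derivative_bounded_linear by blast
  have dirD: "((\<lambda>t. f (x + t *\<^sub>R d)) has_real_derivative f' (x + t *\<^sub>R d) d) (at t)"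
    if xt: "x + t *\<^sub>R d \<in> \<Gamma>" for x d and t :: real
  proof -
    have inner: "((\<lambda>t. x + t *\<^sub>R d) has_derivative (\<lambda>u. u *\<^sub>R d)) (at t)"
      by (auto intro!: derivative_eq_intros)
    have "((\<lambda>t. f (x + t *\<^sub>R d)) has_derivative (\<lambda>u. f' (x + t *\<^sub>R d) (u *\<^sub>R d))) (at t)"
      using has_derivative_compose[OF inner fd[OF xt]] by (simp add: o_def)
    moreover have "(\<lambda>u. f' (x + t *\<^sub>R d) (u *\<^sub>R d)) = (*) (f' (x + t *\<^sub>R d) d)"
      using linear_scale[OF bounded_linear.linear[OF fbl[OF xt]]] by (auto simp: fun_eq_iff)
    ultimately show ?thesis by (simp add: has_field_derivative_def)
  qed
  have pd_eq: "pd i f p = f' p (axis i 1)" if "p \<in> \<Gamma>" for p i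
    using dirD[of p 0 "axis i 1"] that unfolding pd_def by (simp add: DERIV_imp_deriv)
  have lin_sum: "f' p d = (\<Sum>i\<in>UNIV. d $ i * f' p (axis i 1))" if "p \<in> \<Gamma>" for p d
  proof -
    have bl: "bounded_linear (f' p)" using fbl[OF that] .
    have "f' p d = f' p (\<Sum>i\<in>UNIV. d $ i *\<^sub>R axis i 1)"
      using basis_expansion[of d] by (simp add: scalar_mult_eq_scaleR)
    also have "\<dots> = (\<Sum>i\<in>UNIV. f' p (d $ i *\<^sub>R axis i 1))"
      by (rule linear_sum[OF bounded_linear.linear[OF bl]])
    also have "\<dots> = (\<Sum>i\<in>UNIV. d $ i * f' p (axis i 1))"
      using linear_scale[OF bounded_linear.linear[OF bl]] by simp
    finally show ?thesis .
  qed
  have fstrict: "f x < f y" if xG: "x \<in> \<Gamma>" and yG: "y \<in> \<Gamma>" and le: "\<forall>i. x $ i \<le> y $ i"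
    and ne: "x \<noteq> y" for x y
  proof -
    define d where "d = y - x"
    have seg: "x + t *\<^sub>R d \<in> \<Gamma>" if "0 \<le> t" "t \<le> 1" for t
    proof -
      have "(1 - t) *\<^sub>R x + t *\<^sub>R y \<in> \<Gamma>"
        using convex_alt[THEN iffD1, OF \<Gamma>_convex, rule_format, OF xG yG] that by simp
      moreover have "(1 - t) *\<^sub>R x + t *\<^sub>R y = x + t *\<^sub>R d" unfolding d_def by (simp add: algebra_simps)
      ultimately show ?thesis by simp
    qed
    from ne obtain j where "x $ j \<noteq> y $ j" by (auto simp: vec_eq_iff)
    then have j: "d $ j > 0" using le d_def by (simp add: less_le)
    have pos: "f' (x + t *\<^sub>R d) d > 0" if "0 \<le> t" "t \<le> 1" for t
    proof -
      let ?p = "x + t *\<^sub>R d"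
      have pG: "?p \<in> \<Gamma>" using seg that .
      have pp: "f' ?p (axis i 1) > 0" for i
      proof -
        have "pd i f ?p > 0" using f_mono[rule_format, OF pG] by simp
        thus ?thesis using pd_eq[OF pG, of i] by simp
      qed
      have nn: "d $ i * f' ?p (axis i 1) \<ge> 0" for i
        using le pp[of i] unfolding d_def by simp
      have "0 < d $ j * f' ?p (axis j 1)" using j pp[of j] by simp
      also have "\<dots> \<le> (\<Sum>i\<in>UNIV. d $ i * f' ?p (axis i 1))"
        by (rule member_le_sum) (use nn in auto)
      finally show ?thesis using lin_sum[OF pG, of d] by linarith
    qed
    have "(\<lambda>t. f (x + t *\<^sub>R d)) 0 < (\<lambda>t. f (x + t *\<^sub>R d)) 1"
    proof (rule DERIV_pos_imp_increasing_open[of 0 1 "\<lambda>t. f (x + t *\<^sub>R d)"])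
      show "(0::real) < 1" by simp
      fix t :: real assume t: "0 < t" "t < 1"
      show "\<exists>y. DERIV (\<lambda>t. f (x + t *\<^sub>R d)) t :> y \<and> 0 < y"
      proof (intro exI conjI)
        show "DERIV (\<lambda>t. f (x + t *\<^sub>R d)) t :> f' (x + t *\<^sub>R d) d"
          by (rule dirD[OF seg]) (use t in auto)
        show "0 < f' (x + t *\<^sub>R d) d" by (rule pos) (use t in auto)
      qed
    next
      show "continuous_on {0..1} (\<lambda>t. f (x + t *\<^sub>R d))"
      proof (rule DERIV_continuous_on[where D="\<lambda>t. f' (x + t *\<^sub>R d) d"])
        fix t :: real assume "t \<in> {0..1}"
        hence "x + t *\<^sub>R d \<in> \<Gamma>" using seg by simp
        thus "((\<lambda>t. f (x + t *\<^sub>R d)) has_real_derivative f' (x + t *\<^sub>R d) d) (at t within {0..1})"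
          by (rule has_field_derivative_at_within[OF dirD])
      qed
    qed
    thus ?thesis unfolding d_def by simp
  qed
  have g1: "g 1 = a1"
  proof (rule ccontr)
    assume gne: "g 1 \<noteq> a1"
    have P1G: "P 1 \<in> \<Gamma>" using PG by simp
    have P1f: "f (P 1) = 1" using Pf by simp
    have ne: "P 1 \<noteq> a"
    proof
      assume "P 1 = a"
      hence "P 1 $ first_idx = a $ first_idx" by simp
      thus False using gne by (simp add: Pc a1_def)
    qed
    consider "g 1 < a1" | "g 1 > a1" using gne by linarith
    thus False
    proof cases
      case 1
      have le: "\<forall>i. P 1 $ i \<le> a $ i" using 1 by (simp add: Pc a1_def)
      have "f (P 1) < f a" by (rule fstrict[OF P1G aG le ne])
      then show False using P1f fa by simp
    next
      case 2
      have le: "\<forall>i. a $ i \<le> P 1 $ i" using 2 by (simp add: Pc a1_def)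
      have "f a < f (P 1)" by (rule fstrict[OF aG P1G le ne[symmetric]])
      then show False using P1f fa by simp
    qed
  qed
  have g_anti: "g v' \<le> g v" if v: "1 \<le> v" "v \<le> v'" for v v'
  proof (rule ccontr)
    assume "\<not> ?thesis"
    hence lt: "g v < g v'" by simp
    have ne: "P v \<noteq> P v'"
    proof
      assume "P v = P v'"
      hence "P v $ first_idx = P v' $ first_idx" by simp
      thus False using lt by (simp add: Pc)
    qed
    have le: "\<forall>i. P v $ i \<le> P v' $ i"
    proof
      fix i
      show "P v $ i \<le> P v' $ i"
        using lt v aall[of i] by (simp add: Pc less_imp_le)
    qed
    have "f (P v) < f (P v')" by (rule fstrict[OF PG PG le ne]) (use v in auto)
    thus False using Pf v by simp
  qed
  define B where "B = (\<Sum>i\<in>UNIV. a $ i)"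
  have g_low: "g v - a1 * v > - (B * v)" if "v \<ge> 1" for v
  proof -
    have "0 < (\<Sum>i\<in>UNIV. P v $ i)" using \<Gamma>_sum PG[OF that] by auto
    also have "(\<Sum>i\<in>UNIV. P v $ i) = (\<Sum>i\<in>UNIV. a $ i * v + (if i = first_idx then g v - a1 * v else 0))"
      by (rule sum.cong) (auto simp: Pc a1_def)
    also have "\<dots> = B * v + (g v - a1 * v)" by (simp add: sum.distrib B_def sum_distrib_right)
    finally show ?thesis by linarith
  qed
  have Bpos: "B \<ge> 0" unfolding B_def using aall by (simp add: sum_nonneg less_imp_le)
  define h where "h = (\<lambda>v. (g v - a1 * v) / K)"
  define \<beta> where "\<beta> = B / K"
  have \<beta>pos: "\<beta> \<ge> 0" using Bpos Kpos \<beta>_def by simp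
  have h1: "h 1 = 0" by (simp add: h_def g1)
  have h_strict: "h v' < h v" if "1 \<le> v" "v < v'" for v v'
  proof -
    have "g v' \<le> g v" using g_anti that by simp
    moreover have "a1 * v < a1 * v'" using a1pos that by simp
    ultimately show ?thesis unfolding h_def using Kpos by (simp add: divide_strict_right_mono)
  qed
  have h_neg: "h v < 0" if "v > 1" for v using h_strict[of 1 v] h1 that by simp
  have h_anti: "h v' \<le> h v" if "1 \<le> v" "v \<le> v'" for v v'
    using h_strict[of v v'] that by (cases "v = v'") auto
  have h_low: "h v \<ge> - (\<beta> * v)" if "v \<ge> 1" for v
  proof -
    have "(- (B * v)) / K \<le> (g v - a1 * v) / K"
      using g_low[OF that] Kpos by (intro divide_right_mono) auto
    thus ?thesis by (simp add: h_def \<beta>_def)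
  qed
  have hpair: "(x - y) * (h x - h y) \<le> 0" if "x \<ge> 1" "y \<ge> 1" for x y
  proof (cases "x \<le> y")
    case True
    thus ?thesis using h_anti[of x y] that by (simp add: mult_nonpos_nonneg)
  next
    case False
    thus ?thesis using h_anti[of y x] that by (simp add: mult_nonneg_nonpos)
  qed
  have "Ck_on (Suc 0) g {1..}" using g_smooth unfolding smooth_on_def by blast
  then obtain g' where g'w: "\<forall>x\<in>{1..}. (g has_derivative g' x) (at x within {1..})"
    and g'c: "\<forall>v. continuous_on {1..} (\<lambda>x. g' x v)" by auto
  define G where "G = (\<lambda>x. g' x 1)"
  have gD: "(g has_real_derivative G x) (at x within {1..})" if "x \<ge> 1" for x
  proof -
    have d: "(g has_derivative g' x) (at x within {1..})" using g'w that by auto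
    have bl: "bounded_linear (g' x)" using has_derivative_bounded_linear[OF d] .
    have "g' x = (*) (G x)"
    proof
      fix y :: real
      have "g' x (y *\<^sub>R 1) = y *\<^sub>R g' x 1" by (rule linear_scale[OF bounded_linear.linear[OF bl]])
      thus "g' x y = G x * y" by (simp add: G_def)
    qed
    thus ?thesis using d by (simp add: has_field_derivative_def)
  qed
  have Gc: "continuous_on {1..} G" using g'c G_def by simp
  have gDat: "(g has_real_derivative G x) (at x)" if "x > 1" for x
  proof -
    have "(g has_real_derivative G x) (at x within {1..x+1})"
      by (rule DERIV_subset[OF gD]) (use that in auto)
    thus ?thesis using at_within_Icc_at[of 1 x "x+1"] that by simp
  qed
  have gc: "continuous_on {1..} g" by (rule DERIV_continuous_on[OF gD]) auto
  have hLip: "\<exists>L\<ge>0. \<forall>v\<in>{1..c}. h v \<ge> - (L * (v - 1))" if "c > 1" for c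
  proof -
    have "compact (G ` {1..c})"
      by (rule compact_continuous_image) (auto intro: continuous_on_subset[OF Gc])
    then obtain M where M: "\<forall>y\<in>G ` {1..c}. \<bar>y\<bar> \<le> M" using compact_imp_bounded bounded_real by metis
    define M' where "M' = max M 0"
    have gv: "g v - g 1 \<ge> - (M' * (v - 1))" if v: "v \<in> {1..c}" for v
    proof (cases "v = 1")
      case True thus ?thesis by simp
    next
      case False
      hence v1: "1 < v" using v by auto
      have "continuous_on {1..v} g" by (rule continuous_on_subset[OF gc]) auto
      then obtain l z where z: "1 < z" "z < v" and dz: "DERIV g z :> l" and eq: "g v - g 1 = (v - 1) * l"
        using MVT[OF v1] gDat real_differentiable_def by (metis less_imp_le)
      have "l = G z" using DERIV_unique[OF dz gDat] z by simp
      moreover have "z \<in> {1..c}" using z v by auto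
      ultimately have "\<bar>l\<bar> \<le> M" using M by auto
      hence "\<bar>l\<bar> \<le> M'" using M'_def by simp
      hence "(v - 1) * (- M') \<le> (v - 1) * l" using v1 by (intro mult_left_mono) auto
      thus ?thesis using eq by (simp add: mult.commute)
    qed
    show ?thesis
    proof (intro exI[of _ "(M' + a1) / K"] conjI ballI)
      show "(M' + a1)/K \<ge> 0" using Kpos a1pos M'_def by simp
      fix v assume v: "v \<in> {1..c}"
      have "h v = ((g v - g 1) - a1 * (v - 1)) / K" by (simp add: h_def g1 algebra_simps)
      also have "\<dots> \<ge> (- (M' * (v - 1)) - a1 * (v - 1)) / K"
        using gv[OF v] Kpos by (simp add: divide_right_mono)
      also have "(- (M' * (v - 1)) - a1 * (v - 1)) / K = - ((M' + a1)/K * (v - 1))"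
        using Kpos by (simp add: field_simps)
      finally show "h v \<ge> - ((M' + a1)/K * (v - 1))" .
    qed
  qed
  have wD: "(w c has_real_derivative h (w c t) / t) (at t within {1..})" if "c > 1" "t \<ge> 1" for c t
  proof -
    have "(g (w c t) - a $ first_idx * w c t) / ((2 * a $ last_idx + \<delta>) * t) = h (w c t) / t"
      by (simp add: h_def a1_def K_def)
    thus ?thesis using w_ode[rule_format, OF that] by simp
  qed
  have wDI: "(w c has_real_derivative h (w c t) / t) (at t within {1..q})" if "c > 1" "t \<in> {1..q}" for c t q
    by (rule DERIV_subset[OF wD]) (use that in auto)
  have wDI': "(w c has_real_derivative h (w c t) / t) (at t within {p..q})" if "c > 1" "t \<in> {p..q}" "p \<ge> 1" for c t p q
    by (rule DERIV_subset[OF wD]) (use that in auto)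
  have wc: "continuous_on {1..} (w c)" if "c > 1" for c by (rule DERIV_continuous_on[OF wD[OF that]]) auto
  have w_gt1: "w c t > 1" if c: "c > 1" and t: "t \<ge> 1" for c t
  proof (rule ccontr)
    assume "\<not> w c t > 1"
    hence wt: "w c t \<le> 1" by simp
    define T where "T = {1..t} \<inter> w c -` {..1}"
    have Tcl: "closed T" unfolding T_def
      by (rule continuous_closed_preimage) (auto intro: continuous_on_subset[OF wc[OF c]])
    have tT: "t \<in> T" using t wt T_def by auto
    have Tb: "bdd_below T" unfolding T_def by (rule bdd_belowI[of _ 1]) auto
    define S where "S = Inf T"
    have ST: "S \<in> T" unfolding S_def using closed_contains_Inf[OF _ Tb Tcl] tT by auto
    have Smin: "S \<le> y" if "y \<in> T" for y unfolding S_def by (rule cInf_lower[OF that Tb])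
    have S1: "S \<ge> 1" "S \<le> t" and wS: "w c S \<le> 1" using ST T_def by auto
    have Sgt: "S > 1"
    proof (rule ccontr)
      assume "\<not> S > 1"
      hence "S = 1" using S1 by simp
      thus False using wS w_init c by simp
    qed
    have above: "w c y > 1" if "1 \<le> y" "y < S" for y
    proof (rule ccontr)
      assume "\<not> w c y > 1"
      hence "y \<in> T" using that S1 T_def by auto
      thus False using Smin[of y] that by simp
    qed
    have wle: "w c y \<le> c" if y: "1 \<le> y" "y < S" for y
    proof -
      have "w c y \<le> w c 1"
      proof (rule decr_helper[of 1 y "w c" "\<lambda>x. h (w c x) / x"])
        show "1 \<le> y" using y by simp
      next
        fix x assume "x \<in> {1..y}"
        thus "(w c has_real_derivative h (w c x) / x) (at x within {1..y})" by (rule wDI[OF c])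
      next
        fix x assume x: "1 < x" "x < y"
        have "h (w c x) < 0" using h_neg above[of x] x y by simp
        thus "h (w c x) / x \<le> 0" using x by (simp add: divide_nonpos_pos)
      qed
      thus ?thesis using w_init c by simp
    qed
    obtain L where L0: "L \<ge> 0" and L: "\<forall>v\<in>{1..c}. h v \<ge> - (L * (v - 1))" using hLip[OF c] by auto
    define q where "q = (\<lambda>x. (w c x - 1) * x powr L)"
    have "q 1 \<le> q S"
    proof (rule incr_helper[of 1 S q "\<lambda>x. (h (w c x) / x) * x powr L + (L * x powr (L - 1)) * (w c x - 1)"])
      show "1 \<le> S" using S1 by simp
    next
      fix x assume x: "x \<in> {1..S}"
      have A: "((\<lambda>x. w c x - 1) has_real_derivative h (w c x) / x - 0) (at x within {1..S})"
        by (rule DERIV_diff[OF wDI[OF c x] DERIV_const])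
      have B: "((\<lambda>x. x powr L) has_real_derivative L * x powr (L - 1)) (at x within {1..S})"
        by (rule has_field_derivative_at_within[OF has_real_derivative_powr]) (use x in auto)
      show "(q has_real_derivative (h (w c x) / x) * x powr L + (L * x powr (L - 1)) * (w c x - 1)) (at x within {1..S})"
        using DERIV_mult[OF A B] unfolding q_def by simp
    next
      fix x assume x: "1 < x" "x < S"
      have wx: "w c x > 1" "w c x \<le> c" using above wle x by auto
      have "w c x \<in> {1..c}" using wx by auto
      hence "- (L * (w c x - 1)) \<le> h (w c x)" using L by blast
      hence hx: "h (w c x) + L * (w c x - 1) \<ge> 0" by linarith
      have xp: "x powr (L - 1) = x powr L / x" using x by (simp add: powr_diff)
      have "(h (w c x) / x) * x powr L + (L * x powr (L - 1)) * (w c x - 1)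
            = x powr (L - 1) * (h (w c x) + L * (w c x - 1))"
        using x by (simp add: xp field_simps)
      also have "\<dots> \<ge> 0" using hx by simp
      finally show "0 \<le> (h (w c x) / x) * x powr L + (L * x powr (L - 1)) * (w c x - 1)" .
    qed
    moreover have "q 1 = c - 1" using w_init c q_def by simp
    moreover have "q S \<le> 0" unfolding q_def using wS by (simp add: mult_nonpos_nonneg)
    ultimately show False using c by simp
  qed
  have w_anti: "w c t' \<le> w c t" if c: "c > 1" and tt: "1 \<le> t" "t \<le> t'" for c t t'
  proof (rule decr_helper[of t t' "w c" "\<lambda>x. h (w c x) / x"])
    show "t \<le> t'" using tt by simp
  next
    fix x assume "x \<in> {t..t'}"
    thus "(w c has_real_derivative h (w c x) / x) (at x within {t..t'})" by (rule wDI'[OF c _ tt(1)])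
  next
    fix x assume x: "t < x" "x < t'"
    have "h (w c x) < 0" using h_neg w_gt1[OF c, of x] x tt by simp
    thus "h (w c x) / x \<le> 0" using x tt by (simp add: divide_nonpos_pos)
  qed
  have w_le_c: "w c t \<le> c" if "c > 1" "t \<ge> 1" for c t
    using w_anti[of c 1 t] w_init that by simp
  have w_lower: "w c t * t powr \<beta> \<ge> c" if c: "c > 1" and t: "t \<ge> 1" for c t
  proof -
    define q where "q = (\<lambda>x. w c x * x powr \<beta>)"
    have "q 1 \<le> q t"
    proof (rule incr_helper[of 1 t q "\<lambda>x. (h (w c x) / x) * x powr \<beta> + (\<beta> * x powr (\<beta> - 1)) * w c x"])
      show "1 \<le> t" using t by simp
    next
      fix x assume x: "x \<in> {1..t}"
      have A: "(w c has_real_derivative h (w c x) / x) (at x within {1..t})" by (rule wDI[OF c x])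
      have B: "((\<lambda>x. x powr \<beta>) has_real_derivative \<beta> * x powr (\<beta> - 1)) (at x within {1..t})"
        by (rule has_field_derivative_at_within[OF has_real_derivative_powr]) (use x in auto)
      show "(q has_real_derivative (h (w c x) / x) * x powr \<beta> + (\<beta> * x powr (\<beta> - 1)) * w c x) (at x within {1..t})"
        using DERIV_mult[OF A B] unfolding q_def by simp
    next
      fix x assume x: "1 < x" "x < t"
      have wx: "w c x > 1" using w_gt1 c x by simp
      have hx: "h (w c x) + \<beta> * w c x \<ge> 0" using h_low[of "w c x"] wx by simp
      have xp: "x powr (\<beta> - 1) = x powr \<beta> / x" using x by (simp add: powr_diff)
      have "(h (w c x) / x) * x powr \<beta> + (\<beta> * x powr (\<beta> - 1)) * w c x
            = x powr (\<beta> - 1) * (h (w c x) + \<beta> * w c x)"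
        using x by (simp add: xp field_simps)
      also have "\<dots> \<ge> 0" using hx by simp
      finally show "0 \<le> (h (w c x) / x) * x powr \<beta> + (\<beta> * x powr (\<beta> - 1)) * w c x" .
    qed
    thus ?thesis using w_init c q_def by simp
  qed
  have w_lip: "\<bar>w c' t - w c t\<bar> \<le> \<bar>c' - c\<bar>" if c: "c > 1" and c': "c' > 1" and t: "t \<ge> 1" for c c' t
  proof -
    define q where "q = (\<lambda>x. (w c' x - w c x) * (w c' x - w c x))"
    have "q t \<le> q 1"
    proof (rule decr_helper[of 1 t q "\<lambda>x. 2 * ((w c' x - w c x) * (h (w c' x) - h (w c x))) / x"])
      show "1 \<le> t" using t by simp
    next
      fix x assume x: "x \<in> {1..t}"
      have A: "((\<lambda>x. w c' x - w c x) has_real_derivative h (w c' x) / x - h (w c x) / x) (at x within {1..t})"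
        by (rule DERIV_diff[OF wDI[OF c' x] wDI[OF c x]])
      show "(q has_real_derivative 2 * ((w c' x - w c x) * (h (w c' x) - h (w c x))) / x) (at x within {1..t})"
        unfolding q_def
      proof (rule DERIV_cong[OF DERIV_mult[OF A A]])
        show "(h (w c' x) / x - h (w c x) / x) * (w c' x - w c x) + (h (w c' x) / x - h (w c x) / x) * (w c' x - w c x)
          = 2 * ((w c' x - w c x) * (h (w c' x) - h (w c x))) / x"
          using x by (simp add: field_simps)
      qed
    next
      fix x assume x: "1 < x" "x < t"
      have "(w c' x - w c x) * (h (w c' x) - h (w c x)) \<le> 0"
        using hpair w_gt1 c c' x by (simp add: less_imp_le)
      thus "2 * ((w c' x - w c x) * (h (w c' x) - h (w c x))) / x \<le> 0" using x by (simp add: divide_nonpos_pos)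
    qed
    hence "(w c' t - w c t)\<^sup>2 \<le> (c' - c)\<^sup>2" using w_init c c' q_def by (simp add: power2_eq_square)
    thus ?thesis by (simp add: abs_le_square_iff)
  qed
  define \<Phi> where "\<Phi> = (\<lambda>c. w c s)"
  define x0 where "x0 = \<Phi> c2"
  have x0gt: "x0 > 1" using w_gt1 c2_gt s_ge unfolding x0_def \<Phi>_def by simp
  have x0le: "x0 \<le> c2" using w_le_c c2_gt s_ge unfolding x0_def \<Phi>_def by simp
  define \<epsilon> where "\<epsilon> = min ((x0 - 1) / 2) (c2 - 1)"
  have \<epsilon>pos: "\<epsilon> > 0" using x0gt c2_gt \<epsilon>_def by simp
  define m where "m = (1 + x0) / 2"
  have m1: "m > 1" using x0gt m_def by simp
  have x0m: "x0 > m" using x0gt m_def by simp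
  have c2m: "c2 > m" using x0m x0le by simp
  have cgt: "c > 1" if "\<bar>c - c2\<bar> < \<epsilon>" for c using that \<epsilon>_def by auto
  have \<Phi>m: "\<Phi> c > m" if "\<bar>c - c2\<bar> < \<epsilon>" for c
  proof -
    have "\<bar>\<Phi> c - x0\<bar> \<le> \<bar>c - c2\<bar>" unfolding \<Phi>_def x0_def by (rule w_lip[OF c2_gt cgt[OF that] s_ge])
    thus ?thesis using that unfolding \<epsilon>_def m_def by (auto simp: abs_le_iff abs_less_iff)
  qed
  have cm: "c > m" if "\<bar>c - c2\<bar> < \<epsilon>" for c
    using \<Phi>m[OF that] w_le_c[OF cgt[OF that] s_ge] \<Phi>_def by simp
  define r where "r = (\<lambda>v. 1 / h v)"
  have hc: "continuous_on {1..} h" unfolding h_def using Kpos by (intro continuous_intros gc) auto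
  have rc: "continuous_on {m..b} r" for b
  proof -
    have c1: "continuous_on {m..b} h" by (rule continuous_on_subset[OF hc]) (use m1 in auto)
    have nz: "\<forall>v\<in>{m..b}. h v \<noteq> 0"
    proof
      fix v assume "v \<in> {m..b}"
      thus "h v \<noteq> 0" using h_neg[of v] m1 by auto
    qed
    show ?thesis unfolding r_def by (rule continuous_on_divide[OF continuous_on_const c1 nz])
  qed
  define H where "H = (\<lambda>v. integral {m..v} r)"
  have HD: "(H has_real_derivative r v) (at v)" if "v > m" for v
  proof -
    have "(H has_real_derivative r v) (at v within {m..v+1})" unfolding H_def
      by (rule integral_has_real_derivative[OF rc]) (use that in auto)
    thus ?thesis using at_within_Icc_at[of m v "v+1"] that by simp
  qed
  have rneg: "r v < 0" if "v > 1" for v using h_neg[OF that] r_def by simp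
  have Hdec: "H v < H u" if uv: "m < u" "u < v" for u v
  proof (rule DERIV_neg_imp_decreasing_open[of u v H])
    show "u < v" using uv by simp
  next
    fix x assume x: "u < x" "x < v"
    show "\<exists>y. DERIV H x :> y \<and> y < 0"
    proof (intro exI conjI)
      show "DERIV H x :> r x" by (rule HD) (use x uv in auto)
      show "r x < 0" by (rule rneg) (use x uv m1 in auto)
    qed
  next
    show "continuous_on {u..v} H"
      by (rule continuous_at_imp_continuous_on) (use uv in \<open>auto intro!: DERIV_isCont HD\<close>)
  qed
  have Hinj: "H u \<noteq> H v" if "u > m" "v > m" "u \<noteq> v" for u v
    using Hdec[of u v] Hdec[of v u] that by (cases "u < v") auto
  have Hid: "H (\<Phi> c) = H c + ln s" if cc: "\<bar>c - c2\<bar> < \<epsilon>" for c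
  proof -
    have c1: "c > 1" using cgt[OF cc] .
    have traj: "w c y > m" if "y \<in> {1..s}" for y
    proof -
      have "w c s \<le> w c y" using w_anti[OF c1, of y s] that by simp
      moreover have "w c s > m" using \<Phi>m[OF cc] unfolding \<Phi>_def .
      ultimately show ?thesis by simp
    qed
    define F where "F = (\<lambda>y. H (w c y) - ln y)"
    have Fd: "(F has_real_derivative 0) (at y within {1..s})" if y: "y \<in> {1..s}" for y
    proof -
      have y0: "0 < y" using y by simp
      have Ld: "(ln has_real_derivative inverse y) (at y within {1..s})"
        by (rule has_field_derivative_at_within[OF DERIV_ln[OF y0]])
      have "(F has_real_derivative r (w c y) * (h (w c y) / y) - inverse y) (at y within {1..s})"
        unfolding F_def by (rule DERIV_diff[OF DERIV_chain'[OF wDI[OF c1 y] HD[OF traj[OF y]]] Ld])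
      moreover have "r (w c y) * (h (w c y) / y) - inverse y = 0"
      proof -
        have hn: "h (w c y) \<noteq> 0" using h_neg[of "w c y"] w_gt1[OF c1, of y] y by simp
        show ?thesis unfolding r_def using hn y0 by (simp add: field_simps)
      qed
      ultimately show ?thesis by simp
    qed
    have "F s \<le> F 1" by (rule decr_helper[of 1 s F "\<lambda>_. 0", OF s_ge Fd]) simp_all
    moreover have "F 1 \<le> F s" by (rule incr_helper[of 1 s F "\<lambda>_. 0", OF s_ge Fd]) simp_all
    ultimately have "F s = F 1" by simp
    moreover have "w c 1 = c" using w_init c1 by simp
    ultimately show ?thesis unfolding F_def \<Phi>_def by simp
  qed
  have ev: "eventually (\<lambda>c. \<bar>c - c2\<bar> < \<epsilon> \<and> c \<noteq> c2) (at c2)"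
    unfolding eventually_at dist_real_def by (rule exI[of _ \<epsilon>]) (use \<epsilon>pos in auto)
  have Heq: "H (\<Phi> c) - H x0 = H c - H c2" if "\<bar>c - c2\<bar> < \<epsilon>" for c
    using Hid[OF that] Hid[of c2] \<epsilon>pos x0_def by simp
  have Hne: "H c \<noteq> H c2" if "\<bar>c - c2\<bar> < \<epsilon>" "c \<noteq> c2" for c
    using Hinj[OF cm[OF that(1)] c2m that(2)] .
  have \<Phi>ne: "\<Phi> c \<noteq> x0" if "\<bar>c - c2\<bar> < \<epsilon>" "c \<noteq> c2" for c
    using Heq[OF that(1)] Hne[OF that] by auto
  have \<Phi>lim: "(\<Phi> \<longlongrightarrow> x0) (at c2)"
    unfolding tendsto_iff
  proof (intro allI impI)
    fix e :: real assume e: "e > 0"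
    have "eventually (\<lambda>c. \<bar>c - c2\<bar> < min e \<epsilon>) (at c2)"
      unfolding eventually_at dist_real_def using \<epsilon>pos e by (intro exI[of _ "min e \<epsilon>"]) auto
    thus "eventually (\<lambda>c. dist (\<Phi> c) x0 < e) (at c2)"
    proof (rule eventually_mono)
      fix c assume c: "\<bar>c - c2\<bar> < min e \<epsilon>"
      have "\<bar>\<Phi> c - x0\<bar> \<le> \<bar>c - c2\<bar>" unfolding \<Phi>_def x0_def
        by (rule w_lip[OF c2_gt cgt s_ge]) (use c in auto)
      thus "dist (\<Phi> c) x0 < e" using c by (simp add: dist_real_def)
    qed
  qed
  have \<Phi>at: "filterlim \<Phi> (at x0) (at c2)"
    by (rule filterlim_atI[OF \<Phi>lim]) (rule eventually_mono[OF ev], use \<Phi>ne in auto)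
  define Q where "Q = (\<lambda>y. (H y - H x0) / (y - x0))"
  have L2: "(Q \<longlongrightarrow> r x0) (at x0)" using HD[OF x0m] unfolding Q_def has_field_derivative_iff .
  have L1: "((\<lambda>c. (H c - H c2) / (c - c2)) \<longlongrightarrow> r c2) (at c2)"
    using HD[OF c2m] unfolding has_field_derivative_iff .
  have L3: "((\<lambda>c. Q (\<Phi> c)) \<longlongrightarrow> r x0) (at c2)" by (rule filterlim_compose[OF L2 \<Phi>at])
  have rx0: "r x0 \<noteq> 0" using rneg[OF x0gt] by simp
  have L4: "((\<lambda>c. inverse (Q (\<Phi> c))) \<longlongrightarrow> inverse (r x0)) (at c2)" by (rule tendsto_inverse[OF L3 rx0])
  have L5: "((\<lambda>c. inverse (Q (\<Phi> c)) * ((H c - H c2) / (c - c2))) \<longlongrightarrow> inverse (r x0) * r c2) (at c2)"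
    by (rule tendsto_mult[OF L4 L1])
  have L6: "((\<lambda>c. (\<Phi> c - \<Phi> c2) / (c - c2)) \<longlongrightarrow> inverse (r x0) * r c2) (at c2)"
  proof (rule Lim_transform_eventually[OF L5])
    show "eventually (\<lambda>c. inverse (Q (\<Phi> c)) * ((H c - H c2) / (c - c2)) = (\<Phi> c - \<Phi> c2) / (c - c2)) (at c2)"
    proof (rule eventually_mono[OF ev])
      fix c assume c: "\<bar>c - c2\<bar> < \<epsilon> \<and> c \<noteq> c2"
      have q: "Q (\<Phi> c) = (H c - H c2) / (\<Phi> c - x0)" unfolding Q_def using Heq c by simp
      have n1: "H c - H c2 \<noteq> 0" using Hne c by simp
      have n2: "\<Phi> c - x0 \<noteq> 0" using \<Phi>ne c by simp
      have n3: "c - c2 \<noteq> 0" using c by simp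
      show "inverse (Q (\<Phi> c)) * ((H c - H c2) / (c - c2)) = (\<Phi> c - \<Phi> c2) / (c - c2)"
      proof -
        have gen: "inverse (A / B) * (A / C) = B / C" if "A \<noteq> 0" "B \<noteq> 0" "C \<noteq> 0" for A B C :: real
          using that by (simp add: field_simps)
        show ?thesis unfolding q x0_def[symmetric] by (rule gen[OF n1 n2 n3])
      qed
    qed
  qed
  define D where "D = inverse (r x0) * r c2"
  have Dd: "(\<Phi> has_real_derivative D) (at c2)" unfolding has_field_derivative_iff D_def by (rule L6)
  have hx0: "h x0 < 0" using h_neg[OF x0gt] .
  have hc2: "h c2 < 0" using h_neg[OF c2_gt] .
  have hle: "h c2 \<le> h x0" using h_anti[of x0 c2] x0gt x0le by simp
  have Dv: "D = h x0 / h c2" unfolding D_def r_def by simp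
  have D0: "0 < D" unfolding Dv using hx0 hc2 by (simp add: divide_neg_neg)
  have D1: "D \<le> 1" unfolding Dv using hx0 hc2 hle by (simp add: divide_le_eq_1_neg)
  have lim: "filterlim \<Phi> at_top at_top"
    unfolding filterlim_at_top
  proof
    fix Z :: real
    show "eventually (\<lambda>c. Z \<le> \<Phi> c) at_top"
      unfolding eventually_at_top_linorder
    proof (intro exI allI impI)
      fix c assume c: "max 2 (Z * s powr \<beta>) \<le> c"
      have sp: "s powr \<beta> > 0" using s_ge by simp
      have c1: "c > 1" using c by simp
      have "c \<le> w c s * s powr \<beta>" using w_lower[OF c1 s_ge] .
      moreover have "Z * s powr \<beta> \<le> c" using c by simp
      ultimately have "Z * s powr \<beta> \<le> w c s * s powr \<beta>" by linarith
      hence "Z \<le> w c s" using sp by (rule mult_right_le_imp_le)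
      thus "Z \<le> \<Phi> c" using \<Phi>_def by simp
    qed
  qed
  show ?thesis using Dd D0 D1 lim unfolding \<Phi>_def by blast
qed

end
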